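(* Let $G_i=(V,E)$ be a fixed graph with a distinguished vertex $v_i$, let $k$ be an integer and $c\in[k]$ such that some proper $k$-colouring of $G_i$ assigns $c$ to $v_i$. Let $M=x_1,x_2,\dots,x_l$ be a path in $G_i$ with $x_1=v_i$, and let $E$ be the event "$M$ is a path of disagreement" (all of $x_1,\dots,x_l$ are disagreeing). Then $\mathcal{L}_{G_i,k}[E]\le\mathcal{P}_{G_i,k}[E]$.
   Context: $[k]=\{1,\dots,k\}$. The distribution $\mathcal{L}_{G_i,k}$: choose a proper $k$-colouring $\sigma$ uniformly at random among those with $\sigma_{v_i}=c$; choose $q$ uniformly at random from $[k]\setminus\{c\}$; form the disagreement graph $Q_{c,q}$, the subgraph of $G_i$ induced by all vertices reachable from $v_i$ by a path in $G_i$ whose vertices all have colour in $\{c,q\}$; a vertex is "disagreeing" if it belongs to $Q_{c,q}$ and "non-disagreeing" otherwise. The product measure $\mathcal{P}_{G_i,k}$: independently, each vertex $w$ is disagreeing with probability $q_w=\frac{1}{k-\deg_i(w)}$ (with $q_w=1$ if $k\le\deg_i(w)$), where $\deg_i(w)$ is the degree of $w$ in $G_i$, except that $v_i$ is disagreeing with probability $1$. *)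

theory Defs
  imports "HOL-Probability.Probability"
begin

definition graph :: "'a set \<Rightarrow> ('a \<Rightarrow> 'a \<Rightarrow> bool) \<Rightarrow> bool" where
  "graph V E \<longleftrightarrow> finite V \<and> (\<forall>x y. E x y \<longrightarrow> x \<in> V \<and> y \<in> V \<and> x \<noteq> y \<and> E y x)"

definition deg :: "'a set \<Rightarrow> ('a \<Rightarrow> 'a \<Rightarrow> bool) \<Rightarrow> 'a \<Rightarrow> nat" where
  "deg V E w = card {u \<in> V. E w u}"

definition proper_colourings :: "'a set \<Rightarrow> ('a \<Rightarrow> 'a \<Rightarrow> bool) \<Rightarrow> nat \<Rightarrow> ('a \<Rightarrow> nat) set" where
  "proper_colourings V E k =
     {\<sigma> \<in> V \<rightarrow>\<^sub>E {1..k}. \<forall>x\<in>V. \<forall>y\<in>V. E x y \<longrightarrow> \<sigma> x \<noteq> \<sigma> y}"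

definition is_path :: "'a set \<Rightarrow> ('a \<Rightarrow> 'a \<Rightarrow> bool) \<Rightarrow> 'a list \<Rightarrow> bool" where
  "is_path V E M \<longleftrightarrow> M \<noteq> [] \<and> distinct M \<and> set M \<subseteq> V \<and>
     (\<forall>j. Suc j < length M \<longrightarrow> E (M ! j) (M ! Suc j))"

(* the vertex set of the disagreement graph Q_{c,q}: vertices reachable from v by a path
   all of whose vertices have colour in {c,q} *)
definition disagreement_set ::
  "'a set \<Rightarrow> ('a \<Rightarrow> 'a \<Rightarrow> bool) \<Rightarrow> 'a \<Rightarrow> ('a \<Rightarrow> nat) \<Rightarrow> nat \<Rightarrow> nat \<Rightarrow> 'a set" where
  "disagreement_set V E v \<sigma> c q =
     {w \<in> V. \<sigma> v \<in> {c, q} \<and>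
        (\<lambda>x y. x \<in> V \<and> y \<in> V \<and> E x y \<and> \<sigma> x \<in> {c, q} \<and> \<sigma> y \<in> {c, q})\<^sup>*\<^sup>* v w}"

definition L_dist :: "'a set \<Rightarrow> ('a \<Rightarrow> 'a \<Rightarrow> bool) \<Rightarrow> 'a \<Rightarrow> nat \<Rightarrow> nat \<Rightarrow> (('a \<Rightarrow> nat) \<times> nat) pmf" where
  "L_dist V E v k c =
     pmf_of_set ({\<sigma> \<in> proper_colourings V E k. \<sigma> v = c} \<times> ({1..k} - {c}))"

definition L_disagreeing :: "'a set \<Rightarrow> ('a \<Rightarrow> 'a \<Rightarrow> bool) \<Rightarrow> 'a \<Rightarrow> nat \<Rightarrow> nat \<Rightarrow> ('a \<Rightarrow> bool) pmf" where
  "L_disagreeing V E v k c =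
     map_pmf (\<lambda>(\<sigma>, q) w. w \<in> disagreement_set V E v \<sigma> c q) (L_dist V E v k c)"

definition q_prob :: "'a set \<Rightarrow> ('a \<Rightarrow> 'a \<Rightarrow> bool) \<Rightarrow> nat \<Rightarrow> 'a \<Rightarrow> real" where
  "q_prob V E k w = (if k \<le> deg V E w then 1 else 1 / (real k - real (deg V E w)))"

definition P_disagreeing :: "'a set \<Rightarrow> ('a \<Rightarrow> 'a \<Rightarrow> bool) \<Rightarrow> 'a \<Rightarrow> nat \<Rightarrow> ('a \<Rightarrow> bool) pmf" where
  "P_disagreeing V E v k =
     Pi_pmf V False (\<lambda>w. if w = v then return_pmf True else bernoulli_pmf (q_prob V E k w))"

definition path_disagreement_event :: "'a list \<Rightarrow> ('a \<Rightarrow> bool) set" where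
  "path_disagreement_event M = {f. \<forall>x\<in>set M. f x}"

end

theory Submission
  imports Defs
begin

lemma q_prob_nonneg: "0 \<le> q_prob V E k x"
  by (simp add: q_prob_def)

lemma q_prob_le1: "q_prob V E k x \<le> 1"
  by (auto simp: q_prob_def field_simps)

lemma finite_proper:
  assumes "graph V E" shows "finite (proper_colourings V E k)"
proof -
  have "finite (V \<rightarrow>\<^sub>E {1..k})" using assms by (intro finite_PiE) (auto simp: graph_def)
  thus ?thesis unfolding proper_colourings_def by (rule finite_subset[rotated]) auto
qed

lemma count_step:
  assumes g: "graph V E" and xV: "x \<in> V"
    and A: "A = {\<sigma> \<in> proper_colourings V E k. P \<sigma>}"
    and Pupd: "\<And>\<sigma> b'. P \<sigma> \<Longrightarrow> P (\<sigma>(x:=b'))"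
  shows "real (card {\<sigma>\<in>A. \<sigma> x = b}) \<le> q_prob V E k x * real (card A)"
proof -
  define B where "B = {\<sigma>\<in>A. \<sigma> x = b}"
  define N where "N = {u\<in>V. E x u}"
  define av where "av = (\<lambda>\<sigma>::'a\<Rightarrow>nat. {1..k} - \<sigma> ` N)"
  have finA: "finite A" using finite_proper[OF g] A by auto
  have finB: "finite B" using finA B_def by auto
  have finN: "finite N" using g by (auto simp: N_def graph_def)
  have degN: "deg V E x = card N" by (simp add: deg_def N_def)
  have BA: "B \<subseteq> A" by (auto simp: B_def)
  define Pr where "Pr = Sigma B av"
  define f where "f = (\<lambda>(\<sigma>::'a\<Rightarrow>nat, b'::nat). \<sigma>(x:=b'))"
  have inj: "inj_on f Pr"
  proof (rule inj_onI)
    fix p1 p2 assume p1: "p1 \<in> Pr" and p2: "p2 \<in> Pr" and eq: "f p1 = f p2"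
    obtain s1 b1 where [simp]: "p1 = (s1,b1)" by force
    obtain s2 b2 where [simp]: "p2 = (s2,b2)" by force
    have "s1 x = b" "s2 x = b" using p1 p2 by (auto simp: Pr_def B_def)
    from eq have e: "s1(x:=b1) = s2(x:=b2)" by (simp add: f_def)
    hence "b1 = b2" by (metis fun_upd_same)
    moreover have "s1 = s2"
    proof
      fix y show "s1 y = s2 y"
        using e \<open>s1 x = b\<close> \<open>s2 x = b\<close> by (cases "y = x") (auto dest: fun_cong[where x=y])
    qed
    ultimately show "p1 = p2" by simp
  qed
  have img: "f ` Pr \<subseteq> A"
  proof
    fix t assume "t \<in> f ` Pr"
    then obtain \<sigma> b' where sb: "\<sigma> \<in> B" "b' \<in> av \<sigma>" and t: "t = \<sigma>(x:=b')"
      by (auto simp: Pr_def f_def)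
    have \<sigma>A: "\<sigma> \<in> proper_colourings V E k" "P \<sigma>" using sb BA A by auto
    have b': "b' \<in> {1..k}" "\<And>u. u \<in> V \<Longrightarrow> E x u \<Longrightarrow> \<sigma> u \<noteq> b'"
      using sb(2) by (auto simp: av_def N_def)
    have t1: "t \<in> V \<rightarrow>\<^sub>E {1..k}" using \<sigma>A(1) b' xV t by (auto simp: proper_colourings_def PiE_def Pi_def extensional_def)
    have t2: "\<forall>y\<in>V. \<forall>z\<in>V. E y z \<longrightarrow> t y \<noteq> t z"
    proof (intro ballI impI notI)
      fix y z assume yz: "y \<in> V" "z \<in> V" "E y z" "t y = t z"
      have nxx: "\<not> E x x" using g by (auto simp: graph_def)
      have sym: "\<And>a b. E a b \<Longrightarrow> E b a" using g by (auto simp: graph_def)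
      show False
      proof (cases "y = x")
        case True
        hence "z \<noteq> x" using yz nxx by auto
        thus False using True yz b'(2)[of z] t by auto
      next
        case False
        show False
        proof (cases "z = x")
          case True
          thus False using False yz b'(2)[of y] t sym by auto
        next
          case False2: False
          thus False using False yz t \<sigma>A(1) by (auto simp: proper_colourings_def)
        qed
      qed
    qed
    have "t \<in> proper_colourings V E k" using t1 t2 by (simp add: proper_colourings_def)
    moreover have "P t" using Pupd \<sigma>A(2) t by simp
    ultimately show "t \<in> A" using A by simp
  qed
  have cardPr: "card Pr \<le> card A"
    using card_inj_on_le[OF inj img finA] .
  have cav: "\<And>\<sigma>. k - card N \<le> card (av \<sigma>)"
  proof -
    fix \<sigma> :: "'a \<Rightarrow> nat"
    have "card {1..k} - card (\<sigma> ` N) \<le> card (av \<sigma>)"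
      unfolding av_def by (rule diff_card_le_card_Diff) (use finN in auto)
    moreover have "card (\<sigma> ` N) \<le> card N" using finN by (rule card_image_le)
    ultimately show "k - card N \<le> card (av \<sigma>)" by simp
  qed
  have finav: "\<And>\<sigma>. finite (av \<sigma>)" by (simp add: av_def)
  have "card B * (k - card N) = (\<Sum>\<sigma>\<in>B. k - card N)" by simp
  also have "\<dots> \<le> (\<Sum>\<sigma>\<in>B. card (av \<sigma>))" by (rule sum_mono) (rule cav)
  also have "\<dots> = card Pr" unfolding Pr_def using finB finav by (simp add: card_SigmaI)
  finally have key: "card B * (k - card N) \<le> card A" using cardPr by simp
  show ?thesis
  proof (cases "k \<le> deg V E x")
    case True
    have "card B \<le> card A" using BA finA by (rule card_mono[rotated])
    thus ?thesis using True by (simp add: q_prob_def B_def)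
  next
    case False
    hence pos: "real k - real (card N) > 0" using degN by simp
    have "real (card B) * (real k - real (card N)) \<le> real (card A)"
      using key False degN by (metis of_nat_diff of_nat_le_iff of_nat_mult not_le less_imp_le)
    hence "real (card B) \<le> real (card A) / (real k - real (card N))"
      using pos by (simp add: field_simps)
    thus ?thesis using False degN by (simp add: q_prob_def B_def)
  qed
qed


lemma dis_col:
  assumes "w \<in> disagreement_set V E v \<sigma> c q" shows "\<sigma> w \<in> {c, q}"
proof -
  have h: "\<sigma> v \<in> {c,q}" and r: "(\<lambda>x y. x \<in> V \<and> y \<in> V \<and> E x y \<and> \<sigma> x \<in> {c, q} \<and> \<sigma> y \<in> {c, q})\<^sup>*\<^sup>* v w"
    using assms by (auto simp: disagreement_set_def)
  from r show ?thesis
  proof (cases rule: rtranclp.cases)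
    case rtrancl_refl then show ?thesis using h by simp
  next
    case (rtrancl_into_rtrancl b) then show ?thesis by simp
  qed
qed

theorem lemma6:
  fixes V :: "'a set" and E :: "'a \<Rightarrow> 'a \<Rightarrow> bool" and v :: 'a
    and k c :: nat and M :: "'a list"
  assumes "graph V E" and "v \<in> V"
    and "2 \<le> k" and "c \<in> {1..k}"
    and "\<exists>\<sigma>\<in>proper_colourings V E k. \<sigma> v = c"
    and "is_path V E M" and "hd M = v"
  shows "measure_pmf.prob (L_disagreeing V E v k c) (path_disagreement_event M)
           \<le> measure_pmf.prob (P_disagreeing V E v k) (path_disagreement_event M)"
proof -
  note g = assms(1)
  have Mne: "M \<noteq> []" and dM: "distinct M" and MV: "set M \<subseteq> V"
    and Medge: "\<And>j. Suc j < length M \<Longrightarrow> E (M ! j) (M ! Suc j)"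
    using assms(6) by (auto simp: is_path_def)
  have M0: "M ! 0 = v" using Mne assms(7) by (simp add: hd_conv_nth)
  define l where "l = length M"
  have l0: "l > 0" using Mne l_def by simp
  define S where "S = {\<sigma> \<in> proper_colourings V E k. \<sigma> v = c}"
  define Q where "Q = {1..k} - {c}"
  define a where "a = (\<lambda>(q::nat) (i::nat). if even i then c else q)"
  define A where "A = (\<lambda>q j. {\<sigma> \<in> proper_colourings V E k. \<sigma> v = c \<and> (\<forall>i<j. \<sigma> (M!i) = a q i)})"
  define PP where "PP = (\<lambda>j. \<Prod>i\<in>{1..j}. q_prob V E k (M!i))"
  have finS: "finite S" using finite_proper[OF g] by (simp add: S_def)
  have SnE: "S \<noteq> {}" using assms(5) by (auto simp: S_def)
  have finQ: "finite Q" by (simp add: Q_def)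
  have PPnn: "\<And>j. 0 \<le> PP j" by (simp add: PP_def prod_nonneg q_prob_nonneg)
  have Mneq: "\<And>i j. i < l \<Longrightarrow> j < l \<Longrightarrow> i \<noteq> j \<Longrightarrow> M!i \<noteq> M!j"
    using dM l_def by (simp add: nth_eq_iff_index_eq)
  have chain: "j < l \<Longrightarrow> real (card (A q (Suc j))) \<le> PP j * real (card S)" for q j
  proof (induction j)
    case 0
    have "A q (Suc 0) \<subseteq> S" by (auto simp: A_def S_def)
    hence "card (A q (Suc 0)) \<le> card S" using finS by (simp add: card_mono)
    thus ?case by (simp add: PP_def)
  next
    case (Suc j)
    define x where "x = M ! Suc j"
    have xV: "x \<in> V" using Suc.prems MV l_def x_def by auto
    have eq: "A q (Suc (Suc j)) = {\<sigma>\<in>A q (Suc j). \<sigma> x = a q (Suc j)}"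
      by (auto simp: A_def x_def less_Suc_eq)
    have xne: "\<And>i. i < Suc j \<Longrightarrow> M!i \<noteq> x" using Mneq Suc.prems x_def by auto
    have xv: "x \<noteq> v" using xne[of 0] M0 by auto
    have "real (card (A q (Suc (Suc j)))) \<le> q_prob V E k x * real (card (A q (Suc j)))"
      unfolding eq
      by (rule count_step[OF g xV, where P = "\<lambda>\<sigma>. \<sigma> v = c \<and> (\<forall>i<Suc j. \<sigma> (M!i) = a q i)"])
         (auto simp: A_def xne xv xv[symmetric])
    also have "\<dots> \<le> q_prob V E k x * (PP j * real (card S))"
      using Suc by (intro mult_left_mono q_prob_nonneg) auto
    also have "\<dots> = PP (Suc j) * real (card S)"
      by (simp add: PP_def x_def prod.cl_ivl_Suc)
    finally show ?case .
  qed
  define gg where "gg = (\<lambda>(\<sigma>, q) w. w \<in> disagreement_set V E v \<sigma> c q)"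
  define T where "T = S \<times> Q"
  have LD: "L_dist V E v k c = pmf_of_set T" by (simp add: L_dist_def T_def S_def Q_def)
  have QnE: "(if c = 1 then 2 else 1) \<in> Q" using assms(3,4) by (auto simp: Q_def)
  have TnE: "T \<noteq> {}" using SnE QnE by (auto simp: T_def)
  have finT: "finite T" using finS finQ by (simp add: T_def)
  have sub: "T \<inter> gg -` path_disagreement_event M \<subseteq> (\<lambda>(q,\<sigma>). (\<sigma>,q)) ` Sigma Q (\<lambda>q. A q l)"
  proof
    fix p assume p: "p \<in> T \<inter> gg -` path_disagreement_event M"
    obtain \<sigma> q where pq: "p = (\<sigma>, q)" by force
    have \<sigma>S: "\<sigma> \<in> S" and qQ: "q \<in> Q" using p pq by (auto simp: T_def)
    have dis: "\<And>x. x \<in> set M \<Longrightarrow> x \<in> disagreement_set V E v \<sigma> c q"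
      using p pq by (auto simp: gg_def path_disagreement_event_def)
    have pr: "\<sigma> \<in> proper_colourings V E k" "\<sigma> v = c" using \<sigma>S by (auto simp: S_def)
    have qc: "q \<noteq> c" using qQ by (simp add: Q_def)
    have "i < l \<Longrightarrow> \<sigma> (M!i) = a q i" for i
    proof (induction i)
      case 0 then show ?case using M0 pr by (simp add: a_def)
    next
      case (Suc i)
      have "M ! Suc i \<in> set M" using Suc.prems l_def by simp
      have c1: "\<sigma> (M ! Suc i) \<in> {c,q}" by (rule dis_col[OF dis[OF \<open>M ! Suc i \<in> set M\<close>]])
      have "E (M!i) (M!Suc i)" using Medge Suc.prems l_def by simp
      moreover have "M!i \<in> V" "M!Suc i \<in> V" using MV Suc.prems l_def by auto
      ultimately have "\<sigma> (M!i) \<noteq> \<sigma> (M!Suc i)" using pr(1) by (auto simp: proper_colourings_def)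
      with Suc.IH Suc.prems c1 qc show ?case by (auto simp: a_def)
    qed
    hence "\<sigma> \<in> A q l" using pr by (simp add: A_def)
    thus "p \<in> (\<lambda>(q,\<sigma>). (\<sigma>,q)) ` Sigma Q (\<lambda>q. A q l)" using qQ pq by force
  qed
  have finA: "\<And>q j. finite (A q j)" using finite_proper[OF g] by (simp add: A_def)
  have "card (T \<inter> gg -` path_disagreement_event M) \<le> card ((\<lambda>(q,\<sigma>). (\<sigma>,q)) ` Sigma Q (\<lambda>q. A q l))"
    using sub finQ finA by (intro card_mono) auto
  also have "\<dots> \<le> card (Sigma Q (\<lambda>q. A q l))" by (rule card_image_le) (use finQ finA in auto)
  also have "\<dots> = (\<Sum>q\<in>Q. card (A q l))" using finQ finA by (simp add: card_SigmaI)
  finally have c1: "real (card (T \<inter> gg -` path_disagreement_event M)) \<le> (\<Sum>q\<in>Q. real (card (A q l)))"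
    by (metis of_nat_le_iff of_nat_sum)
  have "(\<Sum>q\<in>Q. real (card (A q l))) \<le> (\<Sum>q\<in>Q. PP (l - 1) * real (card S))"
    using chain[of "l - 1"] l0 by (intro sum_mono) simp
  also have "\<dots> = PP (l - 1) * real (card T)" using finS finQ by (simp add: T_def card_cartesian_product)
  finally have c2: "real (card (T \<inter> gg -` path_disagreement_event M)) \<le> PP (l - 1) * real (card T)"
    using c1 by linarith
  have cT: "real (card T) > 0" using finT TnE by (simp add: card_gt_0_iff)
  have Lbound: "measure_pmf.prob (L_disagreeing V E v k c) (path_disagreement_event M) \<le> PP (l - 1)"
  proof -
    have "measure_pmf.prob (L_disagreeing V E v k c) (path_disagreement_event M)
        = real (card (T \<inter> gg -` path_disagreement_event M)) / real (card T)"
      unfolding L_disagreeing_def LD gg_def[symmetric] measure_map_pmf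
      using finT TnE by (simp add: measure_pmf_of_set)
    also have "\<dots> \<le> PP (l - 1)" using c2 cT by (simp add: divide_le_eq)
    finally show ?thesis .
  qed
  define p where "p = (\<lambda>w. if w = v then return_pmf True else bernoulli_pmf (q_prob V E k w))"
  define B where "B = (\<lambda>x. if x \<in> set M then {True} else (UNIV :: bool set))"
  have finV: "finite V" using g by (simp add: graph_def)
  have ev: "path_disagreement_event M = Pi V B"
    using MV by (auto simp: path_disagreement_event_def B_def Pi_def)
  have "measure_pmf.prob (P_disagreeing V E v k) (path_disagreement_event M)
      = (\<Prod>x\<in>V. measure_pmf.prob (p x) (B x))"
    unfolding ev P_disagreeing_def p_def[symmetric] by (rule measure_Pi_pmf_Pi[OF finV])
  also have "\<dots> = (\<Prod>x\<in>set M. measure_pmf.prob (p x) (B x))"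
    using MV finV by (intro prod.mono_neutral_right) (auto simp: B_def)
  also have "\<dots> = (\<Prod>x\<in>set M. if x = v then 1 else q_prob V E k x)"
    by (intro prod.cong refl) (auto simp: B_def p_def measure_pmf_single q_prob_nonneg q_prob_le1)
  also have "\<dots> = (\<Prod>x\<in>set M - {v}. q_prob V E k x)"
    by (subst prod.mono_neutral_left[of "set M" "set M - {v}", symmetric]) (auto intro!: prod.cong)
  also have "\<dots> = PP (l - 1)"
  proof -
    have im: "(\<lambda>i. M!i) ` {1..l-1} = set M - {v}"
    proof
      show "(\<lambda>i. M!i) ` {1..l-1} \<subseteq> set M - {v}"
        using Mneq[of _ 0] M0 l0 l_def by auto
      show "set M - {v} \<subseteq> (\<lambda>i. M!i) ` {1..l-1}"
      proof
        fix x assume "x \<in> set M - {v}"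
        then obtain i where "i < l" "M!i = x" "x \<noteq> v" by (auto simp: in_set_conv_nth l_def)
        moreover have "i \<noteq> 0" using \<open>M!i = x\<close> \<open>x \<noteq> v\<close> M0 by (metis)
        ultimately have "i \<in> {1..l-1}" "x = M!i" by auto
        thus "x \<in> (\<lambda>i. M!i) ` {1..l-1}" by blast
      qed
    qed
    have inj: "inj_on (\<lambda>i. M!i) {1..l-1}" unfolding inj_on_def
    proof (intro ballI impI)
      fix x y assume "x \<in> {1..l-1}" "y \<in> {1..l-1}" "M!x = M!y"
      show "x = y" proof -
        have "x < l" "y < l" using \<open>x \<in> {1..l-1}\<close> \<open>y \<in> {1..l-1}\<close> l0 by auto
        thus "x = y" using Mneq[of x y] \<open>M!x = M!y\<close> by blast
      qed
    qed
    show ?thesis unfolding PP_def im[symmetric] using prod.reindex[OF inj, of "q_prob V E k"] by (simp add: o_def)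
  qed
  finally show ?thesis using Lbound by simp
qed

end
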